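(* Every singular point $K'=(\mathbf{k}'_1,\dots,\mathbf{k}'_6)$ of the singularity variety $V=0$ corresponds to one of the following configurations: (1) the three legs are collinear, i.e. all six points $\mathbf{k}'_1,\dots,\mathbf{k}'_6$ lie on a common line; (2) two legs are collinear and one leg degenerates to a point, i.e. for some permutation $(i,j,l)$ of $(1,2,3)$ one has $\mathbf{k}'_l=\mathbf{k}'_{l+3}$ and $\mathbf{k}'_i,\mathbf{k}'_{i+3},\mathbf{k}'_j,\mathbf{k}'_{j+3}$ lie on a common line; (3) two legs degenerate to points, i.e. $\mathbf{k}'_i=\mathbf{k}'_{i+3}$ and $\mathbf{k}'_j=\mathbf{k}'_{j+3}$ for some distinct $i,j\in\{1,2,3\}$; (4) one leg degenerates to a point and the carrier lines of the remaining two legs pass through that point, i.e. for some permutation $(i,j,l)$ of $(1,2,3)$ one has $\mathbf{k}'_l=\mathbf{k}'_{l+3}=:\mathbf{q}$, the points $\mathbf{q},\mathbf{k}'_i,\mathbf{k}'_{i+3}$ lie on a common line and the points $\mathbf{q},\mathbf{k}'_j,\mathbf{k}'_{j+3}$ lie on a common line.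
   Context: A configuration is $K'=(\mathbf{k}'_1,\dots,\mathbf{k}'_6)$ with $\mathbf{k}'_i=(c_i,d_i)^T\in\mathbb{R}^2$, viewed as a point of $\mathbb{R}^{12}$; $\mathbf{k}'_1,\mathbf{k}'_2,\mathbf{k}'_3$ are base anchor points, $\mathbf{k}'_4,\mathbf{k}'_5,\mathbf{k}'_6$ platform anchor points, and the $i$-th leg ($i=1,2,3$) joins $\mathbf{k}'_i$ and $\mathbf{k}'_{i+3}$; its carrier line is the line through these two points. The singularity polynomial is $V(K')=\det\mathbf{V}(K')$, where $\mathbf{V}(K')$ is the $3\times3$ matrix whose $i$-th column ($i=1,2,3$) consists of the two coordinates of $\mathbf{k}'_{i+3}-\mathbf{k}'_i$ followed by $\det(\mathbf{k}'_i,\mathbf{k}'_{i+3}-\mathbf{k}'_i)$. A singular point of $V=0$ is a point of $\mathbb{R}^{12}$ where $V$ and all its partial derivatives with respect to $c_1,\dots,c_6,d_1,\dots,d_6$ vanish. *)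

theory Defs
  imports "HOL-Analysis.Analysis"
begin

text \<open>A configuration K' = (k'_1,...,k'_6), k'_i = (c_i, d_i), is given by two
coordinate functions c d :: nat => real, of which only the indices 1..6 matter.\<close>

definition pt :: "(nat \<Rightarrow> real) \<Rightarrow> (nat \<Rightarrow> real) \<Rightarrow> nat \<Rightarrow> real \<times> real" where
  "pt c d i = (c i, d i)"

definition det3 :: "real \<Rightarrow> real \<Rightarrow> real \<Rightarrow> real \<Rightarrow> real \<Rightarrow> real \<Rightarrow> real \<Rightarrow> real \<Rightarrow> real \<Rightarrow> real" where
  "det3 a1 a2 a3 b1 b2 b3 e1 e2 e3 =
     a1 * (b2 * e3 - b3 * e2) - b1 * (a2 * e3 - a3 * e2) + e1 * (a2 * b3 - a3 * b2)"

text \<open>Entries of the i-th column of V(K'): the coordinates of k'_{i+3} - k'_i, followed by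
det(k'_i, k'_{i+3} - k'_i).\<close>
definition colx :: "(nat \<Rightarrow> real) \<Rightarrow> (nat \<Rightarrow> real) \<Rightarrow> nat \<Rightarrow> real" where
  "colx c d i = c (i + 3) - c i"
definition coly :: "(nat \<Rightarrow> real) \<Rightarrow> (nat \<Rightarrow> real) \<Rightarrow> nat \<Rightarrow> real" where
  "coly c d i = d (i + 3) - d i"
definition colz :: "(nat \<Rightarrow> real) \<Rightarrow> (nat \<Rightarrow> real) \<Rightarrow> nat \<Rightarrow> real" where
  "colz c d i = c i * (d (i + 3) - d i) - d i * (c (i + 3) - c i)"

definition Vpoly :: "(nat \<Rightarrow> real) \<Rightarrow> (nat \<Rightarrow> real) \<Rightarrow> real" where
  "Vpoly c d = det3 (colx c d 1) (coly c d 1) (colz c d 1)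
                    (colx c d 2) (coly c d 2) (colz c d 2)
                    (colx c d 3) (coly c d 3) (colz c d 3)"

definition singular_point :: "(nat \<Rightarrow> real) \<Rightarrow> (nat \<Rightarrow> real) \<Rightarrow> bool" where
  "singular_point c d \<longleftrightarrow> Vpoly c d = 0 \<and>
     (\<forall>k\<in>{1..6}. ((\<lambda>t. Vpoly (c(k := t)) d) has_real_derivative 0) (at (c k))) \<and>
     (\<forall>k\<in>{1..6}. ((\<lambda>t. Vpoly c (d(k := t))) has_real_derivative 0) (at (d k)))"

end

theory Submission
  imports Defs
begin

lemma online_collinear:
  fixes v1 v2 m :: real and S :: "(real \<times> real) set"
  assumes v: "(v1, v2) \<noteq> (0, 0)" and on: "\<forall>p\<in>S. fst p * v2 - snd p * v1 = m"
  shows "collinear S"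
proof -
  define N where "N = v1* v1 + v2* v2"
  have N: "N > 0" using v unfolding N_def
    by (auto simp: sum_squares_gt_zero_iff)
  define u where "u = (m/ N* v2, - (m/ N* v1))"
  have "\<forall>x\<in>S. \<exists>t. x = u + t *\<^sub>R (v1, v2)"
  proof
    fix x assume x: "x \<in> S"
    obtain x1 x2 where xx: "x = (x1, x2)" by fastforce
    have e: "x1 * v2 - x2 * v1 = m" using on x xx by auto
    define t where "t = (x1 * v1 + x2 * v2) / N"
    have h1: "x1 * N = m * v2 + (x1 * v1 + x2 * v2) * v1"
      unfolding N_def e[symmetric] by (simp add: algebra_simps)
    have h2: "x2 * N = - (m * v1) + (x1 * v1 + x2 * v2) * v2"
      unfolding N_def e[symmetric] by (simp add: algebra_simps)
    have "x1 = m / N * v2 + t * v1" "x2 = - (m / N * v1) + t * v2"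
      using N h1 h2 unfolding t_def
      by (simp_all add: field_simps) (metis add.commute mult.assoc distrib_left)
    then show "\<exists>t. x = u + t *\<^sub>R (v1, v2)" unfolding xx u_def by (intro exI[of _ t]) simp
  qed
  then show ?thesis unfolding collinear_alt by blast
qed

lemma affine_deriv:
  fixes f :: "real \<Rightarrow> real"
  assumes "\<And>t. f t = A + t * B" and "(f has_real_derivative 0) (at x)"
  shows "B = 0"
proof -
  have "f = (\<lambda>t. A + t * B)" using assms(1) by auto
  then have "(f has_real_derivative B) (at x)"
    by (auto intro!: derivative_eq_intros)
  then show ?thesis using assms(2) DERIV_unique by blast
qed

definition nA :: "(nat \<Rightarrow> real) \<Rightarrow> (nat \<Rightarrow> real) \<Rightarrow> nat \<Rightarrow> nat \<Rightarrow> real" where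
  "nA c d j k = coly c d j * colz c d k - colz c d j * coly c d k"
definition nB :: "(nat \<Rightarrow> real) \<Rightarrow> (nat \<Rightarrow> real) \<Rightarrow> nat \<Rightarrow> nat \<Rightarrow> real" where
  "nB c d j k = colz c d j * colx c d k - colx c d j * colz c d k"
definition nE :: "(nat \<Rightarrow> real) \<Rightarrow> (nat \<Rightarrow> real) \<Rightarrow> nat \<Rightarrow> nat \<Rightarrow> real" where
  "nE c d j k = colx c d j * coly c d k - coly c d j * colx c d k"

lemma dexp:
  assumes "(i = 1 \<and> j = 2 \<and> k = 3) \<or> (i = 2 \<and> j = 3 \<and> k = 1) \<or> (i = 3 \<and> j = 1 \<and> k = 2)"
  shows "Vpoly (c(i := t)) d = Vpoly (c(i := 0)) d + t * (- nA c d j k + nE c d j k * d (i + 3))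
    \<and> Vpoly c (d(i := t)) = Vpoly c (d(i := 0)) + t * (- nB c d j k - nE c d j k * c (i + 3))
    \<and> Vpoly (c(i + 3 := t)) d = Vpoly (c(i + 3 := 0)) d + t * (nA c d j k - nE c d j k * d i)
    \<and> Vpoly c (d(i + 3 := t)) = Vpoly c (d(i + 3 := 0)) + t * (nB c d j k + nE c d j k * c i)"
  using assms
  by (elim disjE conjE; hypsubst_thin; simp add: Vpoly_def det3_def colx_def coly_def colz_def nA_def nB_def nE_def algebra_simps)

lemma legeq:
  assumes sp: "singular_point c d"
    and tr: "(i = 1 \<and> j = 2 \<and> k = 3) \<or> (i = 2 \<and> j = 3 \<and> k = 1) \<or> (i = 3 \<and> j = 1 \<and> k = 2)"
  shows "nA c d j k = nE c d j k * d i \<and> nB c d j k = - nE c d j k * c i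
    \<and> nE c d j k * colx c d i = 0 \<and> nE c d j k * coly c d i = 0"
proof -
  have i1: "i \<in> {1..6}" and i2: "i + 3 \<in> {1..6}" using tr by auto
  note D = dexp[OF tr]
  have sd: "\<forall>k\<in>{1..6}. ((\<lambda>t. Vpoly (c(k := t)) d) has_real_derivative 0) (at (c k))"
    "\<forall>k\<in>{1..6}. ((\<lambda>t. Vpoly c (d(k := t))) has_real_derivative 0) (at (d k))"
    using sp unfolding singular_point_def by blast+
  have B1: "- nA c d j k + nE c d j k * d (i + 3) = 0"
    by (rule affine_deriv[OF _ bspec[OF sd(1) i1]]) (use D in blast)
  have B2: "- nB c d j k - nE c d j k * c (i + 3) = 0"
    by (rule affine_deriv[OF _ bspec[OF sd(2) i1]]) (use D in blast)
  have B3: "nA c d j k - nE c d j k * d i = 0"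
    by (rule affine_deriv[OF _ bspec[OF sd(1) i2]]) (use D in blast)
  have B4: "nB c d j k + nE c d j k * c i = 0"
    by (rule affine_deriv[OF _ bspec[OF sd(2) i2]]) (use D in blast)
  have x: "nE c d j k * colx c d i = nE c d j k * c (i + 3) - nE c d j k * c i"
    by (simp add: colx_def algebra_simps)
  have y: "nE c d j k * coly c d i = nE c d j k * d (i + 3) - nE c d j k * d i"
    by (simp add: coly_def algebra_simps)
  show ?thesis using B1 B2 B3 B4 x y by linarith
qed

lemma pair:
  fixes vjx vjy mj vkx vky p1 p2 :: real
  assumes h1: "vjy * (p1 * vky - p2 * vkx) - mj * vky = 0"
    and h2: "mj * vkx - vjx * (p1 * vky - p2 * vkx) = 0"
    and h3: "vjx * vky - vjy * vkx = 0" and nz: "\<not> (vkx = 0 \<and> vky = 0)"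
  shows "p1 * vjy - p2 * vjx = mj \<and> (p1 + vkx) * vjy - (p2 + vky) * vjx = mj"
proof -
  have a: "(p1 * vjy - p2 * vjx - mj) * vkx = 0"
  proof -
    have "(p1 * vjy - p2 * vjx - mj) * vkx = p1 * (vjy * vkx - vjx * vky) + (vjx * (p1 * vky - p2 * vkx) - mj * vkx)"
      by (simp add: algebra_simps)
    then show ?thesis using h2 h3 by simp
  qed
  have b: "(p1 * vjy - p2 * vjx - mj) * vky = 0"
  proof -
    have "(p1 * vjy - p2 * vjx - mj) * vky = p2 * (vjy * vkx - vjx * vky) + (vjy * (p1 * vky - p2 * vkx) - mj * vky)"
      by (simp add: algebra_simps)
    then show ?thesis using h1 h3 by simp
  qed
  have X: "p1 * vjy - p2 * vjx = mj" using a b nz by auto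
  have "(p1 + vkx) * vjy - (p2 + vky) * vjx = (p1 * vjy - p2 * vjx) - (vjx * vky - vjy * vkx)"
    by (simp add: algebra_simps)
  then show ?thesis using X h3 by simp
qed

definition onl :: "(nat \<Rightarrow> real) \<Rightarrow> (nat \<Rightarrow> real) \<Rightarrow> nat \<Rightarrow> real \<Rightarrow> real \<Rightarrow> bool" where
  "onl c d i x y \<longleftrightarrow> x * coly c d i - y * colx c d i = colz c d i"

lemma pairL:
  assumes "nA c d j k = 0" "nB c d j k = 0" "nE c d j k = 0"
    and "\<not> (colx c d k = 0 \<and> coly c d k = 0)"
  shows "onl c d j (c k) (d k) \<and> onl c d j (c (k + 3)) (d (k + 3))"
proof -
  have cz: "colz c d k = c k * coly c d k - d k * colx c d k" by (simp add: colz_def colx_def coly_def)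
  have q: "c (k + 3) = c k + colx c d k" "d (k + 3) = d k + coly c d k" by (simp_all add: colx_def coly_def)
  have "c k * coly c d j - d k * colx c d j = colz c d j \<and>
     (c k + colx c d k) * coly c d j - (d k + coly c d k) * colx c d j = colz c d j"
    by (rule pair) (use assms in \<open>simp_all add: nA_def nB_def nE_def cz\<close>)
  then show ?thesis unfolding onl_def q by simp
qed

lemma throughL:
  assumes "nA c d j k = nE c d j k * p2" "nB c d j k = - nE c d j k * p1" "nE c d j k \<noteq> 0"
  shows "onl c d j p1 p2 \<and> onl c d k p1 p2"
proof -
  have t1: "colx c d j * nA c d j k + coly c d j * nB c d j k + colz c d j * nE c d j k = 0"
    by (simp add: nA_def nB_def nE_def algebra_simps)
  have t2: "colx c d k * nA c d j k + coly c d k * nB c d j k + colz c d k * nE c d j k = 0"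
    by (simp add: nA_def nB_def nE_def algebra_simps)
  have "nE c d j k * (colx c d j * p2 - coly c d j * p1 + colz c d j) = 0"
    using t1 assms(1,2) by (simp add: algebra_simps)
  moreover have "nE c d j k * (colx c d k * p2 - coly c d k * p1 + colz c d k) = 0"
    using t2 assms(1,2) by (simp add: algebra_simps)
  ultimately have "colx c d j * p2 - coly c d j * p1 + colz c d j = 0"
    "colx c d k * p2 - coly c d k * p1 + colz c d k = 0" using assms(3) by auto
  then show ?thesis unfolding onl_def by (auto simp: algebra_simps)
qed

lemma onl_self: "onl c d i (c i) (d i)" "onl c d i (c (i + 3)) (d (i + 3))"
  by (simp_all add: onl_def colx_def coly_def colz_def algebra_simps)

lemma onl_coll:
  assumes "\<not> (colx c d i = 0 \<and> coly c d i = 0)" "\<forall>p\<in>S. onl c d i (fst p) (snd p)"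
  shows "collinear S"
  by (rule online_collinear[of "colx c d i" "coly c d i" S "colz c d i"]) (use assms in \<open>auto simp: onl_def\<close>)

lemma nswap: "nA c d j k = - nA c d k j" "nB c d j k = - nB c d k j" "nE c d j k = - nE c d k j"
  by (simp_all add: nA_def nB_def nE_def)

lemma onedeg:
  assumes "nA c d i j = nE c d i j * d l" "nB c d i j = - nE c d i j * c l"
    and ndi: "\<not> (colx c d i = 0 \<and> coly c d i = 0)" and ndj: "\<not> (colx c d j = 0 \<and> coly c d j = 0)"
  shows "collinear {pt c d i, pt c d (i + 3), pt c d j, pt c d (j + 3)} \<or>
    (collinear {pt c d l, pt c d i, pt c d (i + 3)} \<and> collinear {pt c d l, pt c d j, pt c d (j + 3)})"
proof (cases "nE c d i j = 0")
  case True
  then have "onl c d i (c j) (d j) \<and> onl c d i (c (j + 3)) (d (j + 3))"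
    using assms by (intro pairL) auto
  then have "collinear {pt c d i, pt c d (i + 3), pt c d j, pt c d (j + 3)}"
    by (intro onl_coll[OF ndi]) (auto simp: pt_def onl_self)
  then show ?thesis ..
next
  case False
  then have "onl c d i (c l) (d l) \<and> onl c d j (c l) (d l)"
    using assms by (intro throughL) auto
  then have "collinear {pt c d l, pt c d i, pt c d (i + 3)} \<and> collinear {pt c d l, pt c d j, pt c d (j + 3)}"
    by (intro conjI onl_coll[OF ndi] onl_coll[OF ndj]) (auto simp: pt_def onl_self)
  then show ?thesis ..
qed

theorem theorem4:
  fixes c d :: "nat \<Rightarrow> real"
  assumes "singular_point c d"
  shows "collinear {pt c d 1, pt c d 2, pt c d 3, pt c d 4, pt c d 5, pt c d 6}
    \<or> (\<exists>i j l. {i, j, l} = {1, 2, 3} \<and> pt c d l = pt c d (l + 3) \<and>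
          collinear {pt c d i, pt c d (i + 3), pt c d j, pt c d (j + 3)})
    \<or> (\<exists>i j. i \<in> {1, 2, 3} \<and> j \<in> {1, 2, 3} \<and> i \<noteq> j \<and>
          pt c d i = pt c d (i + 3) \<and> pt c d j = pt c d (j + 3))
    \<or> (\<exists>i j l. {i, j, l} = {1, 2, 3} \<and> pt c d l = pt c d (l + 3) \<and>
          collinear {pt c d l, pt c d i, pt c d (i + 3)} \<and>
          collinear {pt c d l, pt c d j, pt c d (j + 3)})"
proof -
  note L1 = legeq[OF assms, of 1 2 3, simplified]
  note L2 = legeq[OF assms, of 2 3 1, simplified]
  note L3 = legeq[OF assms, of 3 1 2, simplified]
  have Dpt: "\<And>i. pt c d i = pt c d (i + 3) \<longleftrightarrow> colx c d i = 0 \<and> coly c d i = 0"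
    by (auto simp: pt_def colx_def coly_def)
  let ?D = "\<lambda>i. colx c d i = 0 \<and> coly c d i = 0"
  let ?C2 = "\<exists>i j l. {i, j, l} = {1, 2, 3} \<and> pt c d l = pt c d (l + 3) \<and>
          collinear {pt c d i, pt c d (i + 3), pt c d j, pt c d (j + 3)}"
  let ?C3 = "\<exists>i j. i \<in> {1, 2, 3} \<and> j \<in> {1, 2, 3} \<and> i \<noteq> j \<and>
          pt c d i = pt c d (i + 3) \<and> pt c d j = pt c d (j + 3)"
  let ?C4 = "\<exists>i j l. {i, j, l} = {1, 2, 3} \<and> pt c d l = pt c d (l + 3) \<and>
          collinear {pt c d l, pt c d i, pt c d (i + 3)} \<and>
          collinear {pt c d l, pt c d j, pt c d (j + 3)}"
  have s1: "{2::nat, 3, 1} = {1, 2, 3}" and s2: "{3::nat, 1, 2} = {1, 2, 3}" by auto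
  consider (two) "(?D 1 \<and> ?D 2) \<or> (?D 1 \<and> ?D 3) \<or> (?D 2 \<and> ?D 3)"
    | (none) "\<not> ?D 1" "\<not> ?D 2" "\<not> ?D 3"
    | (o1) "?D 1" "\<not> ?D 2" "\<not> ?D 3"
    | (o2) "\<not> ?D 1" "?D 2" "\<not> ?D 3"
    | (o3) "\<not> ?D 1" "\<not> ?D 2" "?D 3" by blast
  then show ?thesis
  proof cases
    case two
    then have ?C3
    proof (elim disjE)
      assume "?D 1 \<and> ?D 2" then show ?C3 using Dpt[of 1] Dpt[of 2]
        by (intro exI[of _ 1] exI[of _ 2]) simp
    next
      assume "?D 1 \<and> ?D 3" then show ?C3 using Dpt[of 1] Dpt[of 3]
        by (intro exI[of _ 1] exI[of _ 3]) simp
    next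
      assume "?D 2 \<and> ?D 3" then show ?C3 using Dpt[of 2] Dpt[of 3]
        by (intro exI[of _ 2] exI[of _ 3]) simp
    qed
    then show ?thesis by blast
  next
    case none
    have e1: "nE c d 2 3 = 0" using L1 none(1) by auto
    have e2: "nE c d 3 1 = 0" using L2 none(2) by auto
    have e3: "nE c d 1 2 = 0" using L3 none(3) by auto
    have a2: "onl c d 1 (c 2) (d 2) \<and> onl c d 1 (c (2 + 3)) (d (2 + 3))"
      using L3 e3 none by (intro pairL) auto
    have a3: "onl c d 1 (c 3) (d 3) \<and> onl c d 1 (c (3 + 3)) (d (3 + 3))"
      using L2 e2 none nswap[of c d 1 3] by (intro pairL) auto
    have "collinear {pt c d 1, pt c d 2, pt c d 3, pt c d 4, pt c d 5, pt c d 6}"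
      apply (rule onl_coll[of c d 1])
      using none(1) apply blast
      using a2 a3 onl_self[of c d 1] by (simp add: pt_def)
    then show ?thesis by blast
  next
    case o1
    have "collinear {pt c d 2, pt c d (2 + 3), pt c d 3, pt c d (3 + 3)} \<or>
      (collinear {pt c d 1, pt c d 2, pt c d (2 + 3)} \<and> collinear {pt c d 1, pt c d 3, pt c d (3 + 3)})"
      using L1 o1 by (intro onedeg) auto
    moreover have "pt c d 1 = pt c d (1 + 3)" using Dpt[of 1] o1 by blast
    ultimately have "?C2 \<or> ?C4" using s1 by blast
    then show ?thesis by blast
  next
    case o2
    have "collinear {pt c d 3, pt c d (3 + 3), pt c d 1, pt c d (1 + 3)} \<or>
      (collinear {pt c d 2, pt c d 3, pt c d (3 + 3)} \<and> collinear {pt c d 2, pt c d 1, pt c d (1 + 3)})"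
      using L2 o2 by (intro onedeg) auto
    moreover have "pt c d 2 = pt c d (2 + 3)" using Dpt[of 2] o2 by blast
    ultimately have "?C2 \<or> ?C4" using s2 by blast
    then show ?thesis by blast
  next
    case o3
    have "collinear {pt c d 1, pt c d (1 + 3), pt c d 2, pt c d (2 + 3)} \<or>
      (collinear {pt c d 3, pt c d 1, pt c d (1 + 3)} \<and> collinear {pt c d 3, pt c d 2, pt c d (2 + 3)})"
      using L3 o3 by (intro onedeg) auto
    moreover have "pt c d 3 = pt c d (3 + 3)" using Dpt[of 3] o3 by blast
    ultimately have "?C2 \<or> ?C4" by blast
    then show ?thesis by blast
  qed
qed

end
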